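(* Let $\mathcal{C}$ be a category, $D \colon \mathcal{I} \to \mathcal{C}$ and $E \colon \mathcal{J} \to \mathcal{C}$ diagrams, $H \colon \mathcal{I}' \to \mathcal{I}$ a final functor and $K \colon \mathcal{J}' \to \mathcal{J}$ an initial functor. Then for any cocone $p \colon D \to \Delta V$ and any cone $q \colon \Delta W \to E$, we have $p \perp q$ if and only if $pH \perp qK$.
   Context: A cocone under $D$ with vertex $V$ is a natural transformation $p \colon D \to \Delta V$; a cone over $E$ with vertex $W$ is a natural transformation $q \colon \Delta W \to E$; $pH \colon DH \to \Delta V$ and $qK \colon \Delta W \to EK$ denote whiskerings. A cylinder $D \rightsquigarrow E$ is a family $r_{ij} \colon Di \to Ej$ natural in $(i,j)$; $q\cdot h$ for a cocone $h\colon D\to\Delta W$ and cone $q\colon \Delta W\to E$ is the cylinder with components $q_jh_i$. Orthogonality $p \perp q$ means: for every cocone $h \colon D \to \Delta W$ and cone $k \colon \Delta V \to E$ with $q \cdot h = k \cdot p$ as cylinders, there is a unique $j \colon V \to W$ with $j \cdot p = h$ and $q \cdot j = k$. A functor $K \colon \mathcal{J}' \to \mathcal{J}$ is initial if each comma category $K/j$ is connected (nonempty and connected); $H \colon \mathcal{I}' \to \mathcal{I}$ is final if each comma category $i/H$ is connected. *)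

theory Defs
  imports Main
begin

text \<open>Comp C g f denotes the composite g after f (defined when Cod f = Dom g).\<close>

record ('o, 'a) cat =
  Obj  :: "'o set"
  Arr  :: "'a set"
  Dom  :: "'a \<Rightarrow> 'o"
  Cod  :: "'a \<Rightarrow> 'o"
  Idn  :: "'o \<Rightarrow> 'a"
  Comp :: "'a \<Rightarrow> 'a \<Rightarrow> 'a"

definition hom :: "('o, 'a) cat \<Rightarrow> 'o \<Rightarrow> 'o \<Rightarrow> 'a set" where
  "hom C x y = {f \<in> Arr C. Dom C f = x \<and> Cod C f = y}"

definition category :: "('o, 'a) cat \<Rightarrow> bool" where
  "category C \<longleftrightarrow>
     (\<forall>f \<in> Arr C. Dom C f \<in> Obj C \<and> Cod C f \<in> Obj C) \<and>
     (\<forall>x \<in> Obj C. Idn C x \<in> hom C x x) \<and>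
     (\<forall>f \<in> Arr C. \<forall>g \<in> Arr C. Cod C f = Dom C g \<longrightarrow>
         Comp C g f \<in> hom C (Dom C f) (Cod C g)) \<and>
     (\<forall>f \<in> Arr C. Comp C f (Idn C (Dom C f)) = f \<and> Comp C (Idn C (Cod C f)) f = f) \<and>
     (\<forall>f \<in> Arr C. \<forall>g \<in> Arr C. \<forall>h \<in> Arr C. Cod C f = Dom C g \<longrightarrow> Cod C g = Dom C h \<longrightarrow>
         Comp C h (Comp C g f) = Comp C (Comp C h g) f)"

record ('o1, 'a1, 'o2, 'a2) ftor =
  fobj :: "'o1 \<Rightarrow> 'o2"
  farr :: "'a1 \<Rightarrow> 'a2"

definition is_functor :: "('o1, 'a1) cat \<Rightarrow> ('o2, 'a2) cat \<Rightarrow> ('o1, 'a1, 'o2, 'a2) ftor \<Rightarrow> bool" where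
  "is_functor A B F \<longleftrightarrow> category A \<and> category B \<and>
     (\<forall>x \<in> Obj A. fobj F x \<in> Obj B) \<and>
     (\<forall>f \<in> Arr A. farr F f \<in> hom B (fobj F (Dom A f)) (fobj F (Cod A f))) \<and>
     (\<forall>x \<in> Obj A. farr F (Idn A x) = Idn B (fobj F x)) \<and>
     (\<forall>f \<in> Arr A. \<forall>g \<in> Arr A. Cod A f = Dom A g \<longrightarrow>
         farr F (Comp A g f) = Comp B (farr F g) (farr F f))"

definition fcomp :: "('o2, 'a2, 'o3, 'a3) ftor \<Rightarrow> ('o1, 'a1, 'o2, 'a2) ftor \<Rightarrow> ('o1, 'a1, 'o3, 'a3) ftor" where
  "fcomp G F = \<lparr>fobj = fobj G \<circ> fobj F, farr = farr G \<circ> farr F\<rparr>"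

definition cocone :: "('o, 'a) cat \<Rightarrow> ('io, 'ia) cat \<Rightarrow> ('io, 'ia, 'o, 'a) ftor \<Rightarrow> 'o \<Rightarrow> ('io \<Rightarrow> 'a) \<Rightarrow> bool" where
  "cocone C I D V p \<longleftrightarrow> V \<in> Obj C \<and>
     (\<forall>i \<in> Obj I. p i \<in> hom C (fobj D i) V) \<and>
     (\<forall>u \<in> Arr I. Comp C (p (Cod I u)) (farr D u) = p (Dom I u))"

definition cone :: "('o, 'a) cat \<Rightarrow> ('jo, 'ja) cat \<Rightarrow> ('jo, 'ja, 'o, 'a) ftor \<Rightarrow> 'o \<Rightarrow> ('jo \<Rightarrow> 'a) \<Rightarrow> bool" where
  "cone C J E W q \<longleftrightarrow> W \<in> Obj C \<and>
     (\<forall>j \<in> Obj J. q j \<in> hom C W (fobj E j)) \<and>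
     (\<forall>v \<in> Arr J. Comp C (farr E v) (q (Dom J v)) = q (Cod J v))"

text \<open>Equality of the cylinders q\<cdot>h and k\<cdot>p means componentwise equality q_j h_i = k_j p_i.\<close>
definition orthogonal ::
  "('o, 'a) cat \<Rightarrow> ('io, 'ia) cat \<Rightarrow> ('jo, 'ja) cat \<Rightarrow>
   ('io, 'ia, 'o, 'a) ftor \<Rightarrow> ('jo, 'ja, 'o, 'a) ftor \<Rightarrow>
   'o \<Rightarrow> ('io \<Rightarrow> 'a) \<Rightarrow> 'o \<Rightarrow> ('jo \<Rightarrow> 'a) \<Rightarrow> bool" where
  "orthogonal C I J D E V p W q \<longleftrightarrow>
     (\<forall>h k. cocone C I D W h \<longrightarrow> cone C J E V k \<longrightarrow>
        (\<forall>i \<in> Obj I. \<forall>j \<in> Obj J. Comp C (q j) (h i) = Comp C (k j) (p i)) \<longrightarrow>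
        (\<exists>!t. t \<in> hom C V W \<and>
              (\<forall>i \<in> Obj I. Comp C t (p i) = h i) \<and>
              (\<forall>j \<in> Obj J. Comp C (q j) t = k j)))"

text \<open>Connectedness of a comma category given by its object set X and the relation
  R of pairs of objects joined by a morphism: nonempty, and any two objects are joined
  by a zigzag.\<close>
definition connected_rel :: "'x set \<Rightarrow> ('x \<times> 'x) set \<Rightarrow> bool" where
  "connected_rel X R \<longleftrightarrow> X \<noteq> {} \<and>
     (\<forall>x \<in> X. \<forall>y \<in> X. (x, y) \<in> ((R \<inter> (X \<times> X)) \<union> (R \<inter> (X \<times> X))\<inverse>)\<^sup>*)"

text \<open>Comma category i/H for H : I' \<rightarrow> I: objects (i', u) with u : i \<rightarrow> H i';
  a morphism (i', u) \<rightarrow> (i'', u') is f : i' \<rightarrow> i'' with H f \<circ> u = u'.\<close>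
definition under_obj :: "('io, 'ia) cat \<Rightarrow> ('jo, 'ja) cat \<Rightarrow> ('jo, 'ja, 'io, 'ia) ftor \<Rightarrow> 'io \<Rightarrow> ('jo \<times> 'ia) set" where
  "under_obj I I' H i = {(i', u). i' \<in> Obj I' \<and> u \<in> hom I i (fobj H i')}"

definition under_rel :: "('io, 'ia) cat \<Rightarrow> ('jo, 'ja) cat \<Rightarrow> ('jo, 'ja, 'io, 'ia) ftor \<Rightarrow> 'io \<Rightarrow> (('jo \<times> 'ia) \<times> ('jo \<times> 'ia)) set" where
  "under_rel I I' H i = {((i', u), (i'', u')). \<exists>f \<in> hom I' i' i''. Comp I (farr H f) u = u'}"

definition final_functor :: "('jo, 'ja) cat \<Rightarrow> ('io, 'ia) cat \<Rightarrow> ('jo, 'ja, 'io, 'ia) ftor \<Rightarrow> bool" where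
  "final_functor I' I H \<longleftrightarrow> is_functor I' I H \<and>
     (\<forall>i \<in> Obj I. connected_rel (under_obj I I' H i) (under_rel I I' H i))"

text \<open>Comma category K/j for K : J' \<rightarrow> J: objects (j', v) with v : K j' \<rightarrow> j;
  a morphism (j', v) \<rightarrow> (j'', v') is f : j' \<rightarrow> j'' with v' \<circ> K f = v.\<close>
definition over_obj :: "('io, 'ia) cat \<Rightarrow> ('jo, 'ja) cat \<Rightarrow> ('jo, 'ja, 'io, 'ia) ftor \<Rightarrow> 'io \<Rightarrow> ('jo \<times> 'ia) set" where
  "over_obj J J' K j = {(j', v). j' \<in> Obj J' \<and> v \<in> hom J (fobj K j') j}"

definition over_rel :: "('io, 'ia) cat \<Rightarrow> ('jo, 'ja) cat \<Rightarrow> ('jo, 'ja, 'io, 'ia) ftor \<Rightarrow> 'io \<Rightarrow> (('jo \<times> 'ia) \<times> ('jo \<times> 'ia)) set" where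
  "over_rel J J' K j = {((j', v), (j'', v')). \<exists>f \<in> hom J' j' j''. Comp J v' (farr K f) = v}"

definition initial_functor :: "('jo, 'ja) cat \<Rightarrow> ('io, 'ia) cat \<Rightarrow> ('jo, 'ja, 'io, 'ia) ftor \<Rightarrow> bool" where
  "initial_functor J' J K \<longleftrightarrow> is_functor J' J K \<and>
     (\<forall>j \<in> Obj J. connected_rel (over_obj J J' K j) (over_rel J J' K j))"

end

theory Submission
  imports Defs
begin

lemma comp_in: "category C \<Longrightarrow> f \<in> hom C a b \<Longrightarrow> g \<in> hom C b c \<Longrightarrow> Comp C g f \<in> hom C a c"
  unfolding category_def hom_def by auto

lemma assoc: "category C \<Longrightarrow> f \<in> hom C a b \<Longrightarrow> g \<in> hom C b c \<Longrightarrow> h \<in> hom C c d \<Longrightarrow>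
   Comp C h (Comp C g f) = Comp C (Comp C h g) f"
  unfolding category_def hom_def by auto

lemma idr: "category C \<Longrightarrow> f \<in> hom C a b \<Longrightarrow> Comp C f (Idn C a) = f"
  unfolding category_def hom_def by auto

lemma idl: "category C \<Longrightarrow> f \<in> hom C a b \<Longrightarrow> Comp C (Idn C b) f = f"
  unfolding category_def hom_def by auto

lemma id_in: "category C \<Longrightarrow> a \<in> Obj C \<Longrightarrow> Idn C a \<in> hom C a a"
  unfolding category_def by auto

lemma fun_cat1: "is_functor A B F \<Longrightarrow> category A" unfolding is_functor_def by auto
lemma fun_cat2: "is_functor A B F \<Longrightarrow> category B" unfolding is_functor_def by auto

lemma fun_hom: "is_functor A B F \<Longrightarrow> f \<in> hom A x y \<Longrightarrow> farr F f \<in> hom B (fobj F x) (fobj F y)"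
  unfolding is_functor_def hom_def by auto

lemma fun_obj: "is_functor A B F \<Longrightarrow> x \<in> Obj A \<Longrightarrow> fobj F x \<in> Obj B"
  unfolding is_functor_def by auto

lemma fun_comp: "is_functor A B F \<Longrightarrow> f \<in> hom A x y \<Longrightarrow> g \<in> hom A y z \<Longrightarrow>
   farr F (Comp A g f) = Comp B (farr F g) (farr F f)"
  unfolding is_functor_def hom_def by auto

lemma fun_id: "is_functor A B F \<Longrightarrow> x \<in> Obj A \<Longrightarrow> farr F (Idn A x) = Idn B (fobj F x)"
  unfolding is_functor_def by auto

lemma cocone_hom: "cocone C I D V p \<Longrightarrow> i \<in> Obj I \<Longrightarrow> p i \<in> hom C (fobj D i) V"
  unfolding cocone_def by auto

lemma cocone_nat: "cocone C I D V p \<Longrightarrow> u \<in> hom I i j \<Longrightarrow> Comp C (p j) (farr D u) = p i"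
  unfolding cocone_def hom_def by auto

lemma cone_hom: "cone C J E W q \<Longrightarrow> j \<in> Obj J \<Longrightarrow> q j \<in> hom C W (fobj E j)"
  unfolding cone_def by auto

lemma cone_nat: "cone C J E W q \<Longrightarrow> v \<in> hom J i j \<Longrightarrow> Comp C (farr E v) (q i) = q j"
  unfolding cone_def hom_def by auto

lemma hom_arr: "f \<in> hom C a b \<Longrightarrow> f \<in> Arr C \<and> Dom C f = a \<and> Cod C f = b"
  unfolding hom_def by auto

lemma cocone_restrict:
  assumes "is_functor I' I H" "cocone C I D V p"
  shows "cocone C I' (fcomp D H) V (\<lambda>i'. p (fobj H i'))"
  unfolding cocone_def fcomp_def
proof (intro conjI ballI, simp_all)
  show "V \<in> Obj C" using assms(2) unfolding cocone_def by auto
  fix i assume "i \<in> Obj I'"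
  then show "p (fobj H i) \<in> hom C (fobj D (fobj H i)) V" using cocone_hom[OF assms(2) fun_obj[OF assms(1)]] by auto
next
  fix u assume "u \<in> Arr I'"
  then have "farr H u \<in> hom I (fobj H (Dom I' u)) (fobj H (Cod I' u))"
    using assms(1) by (intro fun_hom) (auto simp: hom_def)
  then show "Comp C (p (fobj H (Cod I' u))) (farr D (farr H u)) = p (fobj H (Dom I' u))"
    by (rule cocone_nat[OF assms(2)])
qed

lemma cone_restrict:
  assumes "is_functor J' J K" "cone C J E W q"
  shows "cone C J' (fcomp E K) W (\<lambda>j'. q (fobj K j'))"
  unfolding cone_def fcomp_def
proof (intro conjI ballI, simp_all)
  show "W \<in> Obj C" using assms(2) unfolding cone_def by auto
  fix i assume "i \<in> Obj J'"
  then show "q (fobj K i) \<in> hom C W (fobj E (fobj K i))" using cone_hom[OF assms(2) fun_obj[OF assms(1)]] by auto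
next
  fix u assume "u \<in> Arr J'"
  then have "farr K u \<in> hom J (fobj K (Dom J' u)) (fobj K (Cod J' u))"
    using assms(1) by (intro fun_hom) (auto simp: hom_def)
  then show "Comp C (farr E (farr K u)) (q (fobj K (Dom J' u))) = q (fobj K (Cod J' u))"
    by (rule cone_nat[OF assms(2)])
qed

lemma final_ne: "final_functor I' I H \<Longrightarrow> i \<in> Obj I \<Longrightarrow> \<exists>i' u. i' \<in> Obj I' \<and> u \<in> hom I i (fobj H i')"
  unfolding final_functor_def connected_rel_def under_obj_def by fastforce

lemma initial_ne: "initial_functor J' J K \<Longrightarrow> j \<in> Obj J \<Longrightarrow> \<exists>j' v. j' \<in> Obj J' \<and> v \<in> hom J (fobj K j') j"
  unfolding initial_functor_def connected_rel_def over_obj_def by fastforce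

lemma const_conn:
  assumes "connected_rel X R"
    and step: "\<And>x y. x \<in> X \<Longrightarrow> y \<in> X \<Longrightarrow> (x, y) \<in> R \<Longrightarrow> \<phi> x = \<phi> y"
    and "x \<in> X" "y \<in> X"
  shows "\<phi> x = \<phi> y"
proof -
  have "(x, y) \<in> ((R \<inter> (X \<times> X)) \<union> (R \<inter> (X \<times> X))\<inverse>)\<^sup>*"
    using assms unfolding connected_rel_def by auto
  then show ?thesis
  proof (induction rule: rtrancl_induct)
    case base then show ?case by simp
  next
    case (step y z) then show ?case using assms(2) by auto
  qed
qed

lemma cocone_extend:
  assumes fin: "final_functor I' I H" and FD: "is_functor I C D"
    and g: "cocone C I' (fcomp D H) W g"
  shows "\<exists>h. cocone C I D W h \<and> (\<forall>i'\<in>Obj I'. h (fobj H i') = g i')"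
proof -
  have FH: "is_functor I' I H" using fin unfolding final_functor_def by auto
  have cC: "category C" using FD fun_cat2 by blast
  have cI: "category I" using FD fun_cat1 by blast
  define \<phi> where "\<phi> = (\<lambda>(i', u). Comp C (g i') (farr D u))"
  have ghom: "\<And>i'. i' \<in> Obj I' \<Longrightarrow> g i' \<in> hom C (fobj D (fobj H i')) W"
    using cocone_hom[OF g] by (simp add: fcomp_def)
  have gnat: "\<And>f a b. f \<in> hom I' a b \<Longrightarrow> Comp C (g b) (farr D (farr H f)) = g a"
    using cocone_nat[OF g] by (simp add: fcomp_def)
  have inv: "\<phi> x = \<phi> y" if "i \<in> Obj I" "x \<in> under_obj I I' H i" "y \<in> under_obj I I' H i" for i x y
  proof (rule const_conn[where X="under_obj I I' H i" and R="under_rel I I' H i"])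
    show "connected_rel (under_obj I I' H i) (under_rel I I' H i)"
      using fin that unfolding final_functor_def by auto
  next
    fix x y assume xy: "x \<in> under_obj I I' H i" "y \<in> under_obj I I' H i" "(x, y) \<in> under_rel I I' H i"
    obtain i1 u1 where x: "x = (i1, u1)" by fastforce
    obtain i2 u2 where y: "y = (i2, u2)" by fastforce
    from xy x y obtain f where f: "f \<in> hom I' i1 i2" and fu: "Comp I (farr H f) u1 = u2"
      and u1: "u1 \<in> hom I i (fobj H i1)" and i2: "i2 \<in> Obj I'"
      unfolding under_obj_def under_rel_def by auto
    have Hf: "farr H f \<in> hom I (fobj H i1) (fobj H i2)" using fun_hom[OF FH f] .
    have "\<phi> y = Comp C (g i2) (farr D (Comp I (farr H f) u1))" using y fu \<phi>_def by simp
    also have "\<dots> = Comp C (g i2) (Comp C (farr D (farr H f)) (farr D u1))"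
      using fun_comp[OF FD u1 Hf] by simp
    also have "\<dots> = Comp C (Comp C (g i2) (farr D (farr H f))) (farr D u1)"
      using assoc[OF cC fun_hom[OF FD u1] fun_hom[OF FD Hf] ghom[OF i2]] .
    also have "\<dots> = \<phi> x" using gnat[OF f] x \<phi>_def by simp
    finally show "\<phi> x = \<phi> y" by simp
  qed (use that in auto)
  define h where "h i = \<phi> (SOME x. x \<in> under_obj I I' H i)" for i
  have hx: "h i = \<phi> x" if "i \<in> Obj I" "x \<in> under_obj I I' H i" for i x
  proof -
    have "(SOME x. x \<in> under_obj I I' H i) \<in> under_obj I I' H i" using that(2) by (rule someI)
    then show ?thesis unfolding h_def using inv that by blast
  qed
  have "cocone C I D W h"
    unfolding cocone_def
  proof (intro conjI ballI)
    show "W \<in> Obj C" using g unfolding cocone_def by auto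
  next
    fix i assume i: "i \<in> Obj I"
    obtain i' u where iu: "i' \<in> Obj I'" "u \<in> hom I i (fobj H i')" using final_ne[OF fin i] by blast
    have "h i = Comp C (g i') (farr D u)" using hx[OF i, of "(i', u)"] iu \<phi>_def
      by (auto simp: under_obj_def)
    then show "h i \<in> hom C (fobj D i) W" using comp_in[OF cC fun_hom[OF FD iu(2)] ghom[OF iu(1)]] by simp
  next
    fix a assume a: "a \<in> Arr I"
    define i1 where "i1 = Dom I a"
    define i2 where "i2 = Cod I a"
    have ah: "a \<in> hom I i1 i2" using a unfolding i1_def i2_def hom_def by auto
    have i2: "i2 \<in> Obj I" and i1: "i1 \<in> Obj I" using a cI unfolding i1_def i2_def category_def by auto
    obtain i' u where iu: "i' \<in> Obj I'" "u \<in> hom I i2 (fobj H i')" using final_ne[OF fin i2] by blast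
    have "h i2 = Comp C (g i') (farr D u)" using hx[OF i2, of "(i', u)"] iu \<phi>_def
      by (auto simp: under_obj_def)
    then have "Comp C (h i2) (farr D a) = Comp C (Comp C (g i') (farr D u)) (farr D a)" by simp
    also have "\<dots> = Comp C (g i') (Comp C (farr D u) (farr D a))"
      using assoc[OF cC fun_hom[OF FD ah] fun_hom[OF FD iu(2)] ghom[OF iu(1)]] by simp
    also have "\<dots> = Comp C (g i') (farr D (Comp I u a))" using fun_comp[OF FD ah iu(2)] by simp
    also have "\<dots> = h i1" using hx[OF i1, of "(i', Comp I u a)"] iu comp_in[OF cI ah iu(2)] \<phi>_def
      by (auto simp: under_obj_def)
    finally show "Comp C (h (Cod I a)) (farr D a) = h (Dom I a)" unfolding i1_def i2_def .
  qed
  moreover have "\<forall>i'\<in>Obj I'. h (fobj H i') = g i'"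
  proof
    fix i' assume i': "i' \<in> Obj I'"
    have Hi: "fobj H i' \<in> Obj I" using fun_obj[OF FH i'] .
    have "h (fobj H i') = Comp C (g i') (farr D (Idn I (fobj H i')))"
      using hx[OF Hi, of "(i', Idn I (fobj H i'))"] i' id_in[OF cI Hi] \<phi>_def
      by (auto simp: under_obj_def)
    also have "\<dots> = g i'" using fun_id[OF FD Hi] idr[OF cC ghom[OF i']] by simp
    finally show "h (fobj H i') = g i'" .
  qed
  ultimately show ?thesis by blast
qed

lemma cone_extend:
  assumes ini: "initial_functor J' J K" and FE: "is_functor J C E"
    and l: "cone C J' (fcomp E K) V l"
  shows "\<exists>k. cone C J E V k \<and> (\<forall>j'\<in>Obj J'. k (fobj K j') = l j')"
proof -
  have FK: "is_functor J' J K" using ini unfolding initial_functor_def by auto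
  have cC: "category C" using FE fun_cat2 by blast
  have cJ: "category J" using FE fun_cat1 by blast
  define \<psi> where "\<psi> = (\<lambda>(j', v). Comp C (farr E v) (l j'))"
  have lhom: "\<And>j'. j' \<in> Obj J' \<Longrightarrow> l j' \<in> hom C V (fobj E (fobj K j'))"
    using cone_hom[OF l] by (simp add: fcomp_def)
  have lnat: "\<And>f a b. f \<in> hom J' a b \<Longrightarrow> Comp C (farr E (farr K f)) (l a) = l b"
    using cone_nat[OF l] by (simp add: fcomp_def)
  have inv: "\<psi> x = \<psi> y" if "j \<in> Obj J" "x \<in> over_obj J J' K j" "y \<in> over_obj J J' K j" for j x y
  proof (rule const_conn[where X="over_obj J J' K j" and R="over_rel J J' K j"])
    show "connected_rel (over_obj J J' K j) (over_rel J J' K j)"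
      using ini that unfolding initial_functor_def by auto
  next
    fix x y assume xy: "x \<in> over_obj J J' K j" "y \<in> over_obj J J' K j" "(x, y) \<in> over_rel J J' K j"
    obtain j1 v1 where x: "x = (j1, v1)" by fastforce
    obtain j2 v2 where y: "y = (j2, v2)" by fastforce
    from xy x y obtain f where f: "f \<in> hom J' j1 j2" and fv: "Comp J v2 (farr K f) = v1"
      and v2: "v2 \<in> hom J (fobj K j2) j" and j1: "j1 \<in> Obj J'"
      unfolding over_obj_def over_rel_def by auto
    have Kf: "farr K f \<in> hom J (fobj K j1) (fobj K j2)" using fun_hom[OF FK f] .
    have "\<psi> x = Comp C (farr E (Comp J v2 (farr K f))) (l j1)" using x fv \<psi>_def by simp
    also have "\<dots> = Comp C (Comp C (farr E v2) (farr E (farr K f))) (l j1)"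
      using fun_comp[OF FE Kf v2] by simp
    also have "\<dots> = Comp C (farr E v2) (Comp C (farr E (farr K f)) (l j1))"
      using assoc[OF cC lhom[OF j1] fun_hom[OF FE Kf] fun_hom[OF FE v2]] by simp
    also have "\<dots> = \<psi> y" using lnat[OF f] y \<psi>_def by simp
    finally show "\<psi> x = \<psi> y" .
  qed (use that in auto)
  define k where "k j = \<psi> (SOME x. x \<in> over_obj J J' K j)" for j
  have kx: "k j = \<psi> x" if "j \<in> Obj J" "x \<in> over_obj J J' K j" for j x
  proof -
    have "(SOME x. x \<in> over_obj J J' K j) \<in> over_obj J J' K j" using that(2) by (rule someI)
    then show ?thesis unfolding k_def using inv that by blast
  qed
  have "cone C J E V k"
    unfolding cone_def
  proof (intro conjI ballI)
    show "V \<in> Obj C" using l unfolding cone_def by auto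
  next
    fix j assume j: "j \<in> Obj J"
    obtain j' v where jv: "j' \<in> Obj J'" "v \<in> hom J (fobj K j') j" using initial_ne[OF ini j] by blast
    have "k j = Comp C (farr E v) (l j')" using kx[OF j, of "(j', v)"] jv \<psi>_def
      by (auto simp: over_obj_def)
    then show "k j \<in> hom C V (fobj E j)" using comp_in[OF cC lhom[OF jv(1)] fun_hom[OF FE jv(2)]] by simp
  next
    fix a assume a: "a \<in> Arr J"
    define j1 where "j1 = Dom J a"
    define j2 where "j2 = Cod J a"
    have ah: "a \<in> hom J j1 j2" using a unfolding j1_def j2_def hom_def by auto
    have j2: "j2 \<in> Obj J" and j1: "j1 \<in> Obj J" using a cJ unfolding j1_def j2_def category_def by auto
    obtain j' v where jv: "j' \<in> Obj J'" "v \<in> hom J (fobj K j') j1" using initial_ne[OF ini j1] by blast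
    have "k j1 = Comp C (farr E v) (l j')" using kx[OF j1, of "(j', v)"] jv \<psi>_def
      by (auto simp: over_obj_def)
    then have "Comp C (farr E a) (k j1) = Comp C (farr E a) (Comp C (farr E v) (l j'))" by simp
    also have "\<dots> = Comp C (Comp C (farr E a) (farr E v)) (l j')"
      using assoc[OF cC lhom[OF jv(1)] fun_hom[OF FE jv(2)] fun_hom[OF FE ah]] by simp
    also have "\<dots> = Comp C (farr E (Comp J a v)) (l j')" using fun_comp[OF FE jv(2) ah] by simp
    also have "\<dots> = k j2" using kx[OF j2, of "(j', Comp J a v)"] jv comp_in[OF cJ jv(2) ah] \<psi>_def
      by (auto simp: over_obj_def)
    finally show "Comp C (farr E a) (k (Dom J a)) = k (Cod J a)" unfolding j1_def j2_def .
  qed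
  moreover have "\<forall>j'\<in>Obj J'. k (fobj K j') = l j'"
  proof
    fix j' assume j': "j' \<in> Obj J'"
    have Kj: "fobj K j' \<in> Obj J" using fun_obj[OF FK j'] .
    have "k (fobj K j') = Comp C (farr E (Idn J (fobj K j'))) (l j')"
      using kx[OF Kj, of "(j', Idn J (fobj K j'))"] j' id_in[OF cJ Kj] \<psi>_def
      by (auto simp: over_obj_def)
    also have "\<dots> = l j'" using fun_id[OF FE Kj] idl[OF cC lhom[OF j']] by simp
    finally show "k (fobj K j') = l j'" .
  qed
  ultimately show ?thesis by blast
qed

lemma lemA:
  assumes cC: "category C" and FD: "is_functor I C D" and fin: "final_functor I' I H"
    and p: "cocone C I D V p" and h: "cocone C I D W h" and t: "t \<in> hom C V W"
  shows "(\<forall>i\<in>Obj I. Comp C t (p i) = h i) \<longleftrightarrow> (\<forall>i'\<in>Obj I'. Comp C t (p (fobj H i')) = h (fobj H i'))"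
proof
  have FH: "is_functor I' I H" using fin unfolding final_functor_def by auto
  assume "\<forall>i\<in>Obj I. Comp C t (p i) = h i"
  then show "\<forall>i'\<in>Obj I'. Comp C t (p (fobj H i')) = h (fobj H i')" using fun_obj[OF FH] by auto
next
  assume R: "\<forall>i'\<in>Obj I'. Comp C t (p (fobj H i')) = h (fobj H i')"
  show "\<forall>i\<in>Obj I. Comp C t (p i) = h i"
  proof
    fix i assume i: "i \<in> Obj I"
    obtain i' u where iu: "i' \<in> Obj I'" "u \<in> hom I i (fobj H i')" using final_ne[OF fin i] by blast
    have FH: "is_functor I' I H" using fin unfolding final_functor_def by auto
    have Hi: "fobj H i' \<in> Obj I" using fun_obj[OF FH iu(1)] .
    have "Comp C t (p i) = Comp C t (Comp C (p (fobj H i')) (farr D u))" using cocone_nat[OF p iu(2)] by simp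
    also have "\<dots> = Comp C (Comp C t (p (fobj H i'))) (farr D u)"
      using assoc[OF cC fun_hom[OF FD iu(2)] cocone_hom[OF p Hi] t] .
    also have "\<dots> = h i" using R iu cocone_nat[OF h iu(2)] by simp
    finally show "Comp C t (p i) = h i" .
  qed
qed

lemma lemB:
  assumes cC: "category C" and FE: "is_functor J C E" and ini: "initial_functor J' J K"
    and q: "cone C J E W q" and k: "cone C J E V k" and t: "t \<in> hom C V W"
  shows "(\<forall>j\<in>Obj J. Comp C (q j) t = k j) \<longleftrightarrow> (\<forall>j'\<in>Obj J'. Comp C (q (fobj K j')) t = k (fobj K j'))"
proof
  have FK: "is_functor J' J K" using ini unfolding initial_functor_def by auto
  assume "\<forall>j\<in>Obj J. Comp C (q j) t = k j"
  then show "\<forall>j'\<in>Obj J'. Comp C (q (fobj K j')) t = k (fobj K j')" using fun_obj[OF FK] by auto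
next
  assume R: "\<forall>j'\<in>Obj J'. Comp C (q (fobj K j')) t = k (fobj K j')"
  show "\<forall>j\<in>Obj J. Comp C (q j) t = k j"
  proof
    fix j assume j: "j \<in> Obj J"
    obtain j' v where jv: "j' \<in> Obj J'" "v \<in> hom J (fobj K j') j" using initial_ne[OF ini j] by blast
    have FK: "is_functor J' J K" using ini unfolding initial_functor_def by auto
    have Kj: "fobj K j' \<in> Obj J" using fun_obj[OF FK jv(1)] .
    have "Comp C (q j) t = Comp C (Comp C (farr E v) (q (fobj K j'))) t" using cone_nat[OF q jv(2)] by simp
    also have "\<dots> = Comp C (farr E v) (Comp C (q (fobj K j')) t)"
      using assoc[OF cC t cone_hom[OF q Kj] fun_hom[OF FE jv(2)]] by simp
    also have "\<dots> = k j" using R jv cone_nat[OF k jv(2)] by simp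
    finally show "Comp C (q j) t = k j" .
  qed
qed

lemma lemC:
  assumes cC: "category C" and FD: "is_functor I C D" and FE: "is_functor J C E"
    and fin: "final_functor I' I H" and ini: "initial_functor J' J K"
    and p: "cocone C I D V p" and h: "cocone C I D W h"
    and q: "cone C J E W q" and k: "cone C J E V k"
  shows "(\<forall>i\<in>Obj I. \<forall>j\<in>Obj J. Comp C (q j) (h i) = Comp C (k j) (p i)) \<longleftrightarrow>
         (\<forall>i'\<in>Obj I'. \<forall>j'\<in>Obj J'. Comp C (q (fobj K j')) (h (fobj H i')) = Comp C (k (fobj K j')) (p (fobj H i')))"
proof
  have FH: "is_functor I' I H" using fin unfolding final_functor_def by auto
  have FK: "is_functor J' J K" using ini unfolding initial_functor_def by auto
  assume "\<forall>i\<in>Obj I. \<forall>j\<in>Obj J. Comp C (q j) (h i) = Comp C (k j) (p i)"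
  then show "\<forall>i'\<in>Obj I'. \<forall>j'\<in>Obj J'. Comp C (q (fobj K j')) (h (fobj H i')) = Comp C (k (fobj K j')) (p (fobj H i'))"
    using fun_obj[OF FH] fun_obj[OF FK] by auto
next
  have FH: "is_functor I' I H" using fin unfolding final_functor_def by auto
  have FK: "is_functor J' J K" using ini unfolding initial_functor_def by auto
  assume R: "\<forall>i'\<in>Obj I'. \<forall>j'\<in>Obj J'. Comp C (q (fobj K j')) (h (fobj H i')) = Comp C (k (fobj K j')) (p (fobj H i'))"
  show "\<forall>i\<in>Obj I. \<forall>j\<in>Obj J. Comp C (q j) (h i) = Comp C (k j) (p i)"
  proof (intro ballI)
    fix i j assume i: "i \<in> Obj I" and j: "j \<in> Obj J"
    obtain i' u where iu: "i' \<in> Obj I'" "u \<in> hom I i (fobj H i')" using final_ne[OF fin i] by blast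
    obtain j' v where jv: "j' \<in> Obj J'" "v \<in> hom J (fobj K j') j" using initial_ne[OF ini j] by blast
    have Hi: "fobj H i' \<in> Obj I" using fun_obj[OF FH iu(1)] .
    have Kj: "fobj K j' \<in> Obj J" using fun_obj[OF FK jv(1)] .
    have Du: "farr D u \<in> hom C (fobj D i) (fobj D (fobj H i'))" using fun_hom[OF FD iu(2)] .
    have Ev: "farr E v \<in> hom C (fobj E (fobj K j')) (fobj E j)" using fun_hom[OF FE jv(2)] .
    have hH: "h (fobj H i') \<in> hom C (fobj D (fobj H i')) W" using cocone_hom[OF h Hi] .
    have pH: "p (fobj H i') \<in> hom C (fobj D (fobj H i')) V" using cocone_hom[OF p Hi] .
    have qK: "q (fobj K j') \<in> hom C W (fobj E (fobj K j'))" using cone_hom[OF q Kj] .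
    have kK: "k (fobj K j') \<in> hom C V (fobj E (fobj K j'))" using cone_hom[OF k Kj] .
    have qj: "q j \<in> hom C W (fobj E j)" using cone_hom[OF q j] .
    have kj: "k j \<in> hom C V (fobj E j)" using cone_hom[OF k j] .
    have "Comp C (q j) (h i) = Comp C (q j) (Comp C (h (fobj H i')) (farr D u))"
      using cocone_nat[OF h iu(2)] by simp
    also have "\<dots> = Comp C (Comp C (q j) (h (fobj H i'))) (farr D u)"
      using assoc[OF cC Du hH qj] .
    also have "Comp C (q j) (h (fobj H i')) = Comp C (Comp C (farr E v) (q (fobj K j'))) (h (fobj H i'))"
      using cone_nat[OF q jv(2)] by simp
    also have "\<dots> = Comp C (farr E v) (Comp C (q (fobj K j')) (h (fobj H i')))"
      using assoc[OF cC hH qK Ev] by simp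
    also have "\<dots> = Comp C (farr E v) (Comp C (k (fobj K j')) (p (fobj H i')))"
      using R iu jv by simp
    also have "\<dots> = Comp C (Comp C (farr E v) (k (fobj K j'))) (p (fobj H i'))"
      using assoc[OF cC pH kK Ev] .
    also have "\<dots> = Comp C (k j) (p (fobj H i'))" using cone_nat[OF k jv(2)] by simp
    also have "Comp C (Comp C (k j) (p (fobj H i'))) (farr D u) = Comp C (k j) (Comp C (p (fobj H i')) (farr D u))"
      using assoc[OF cC Du pH kj] by simp
    also have "\<dots> = Comp C (k j) (p i)" using cocone_nat[OF p iu(2)] by simp
    finally show "Comp C (q j) (h i) = Comp C (k j) (p i)" .
  qed
qed

theorem lemma2p7:
  fixes C :: "('o, 'a) cat"
    and I :: "('io, 'ia) cat" and J :: "('jo, 'ja) cat"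
    and I' :: "('io2, 'ia2) cat" and J' :: "('jo2, 'ja2) cat"
    and D :: "('io, 'ia, 'o, 'a) ftor" and E :: "('jo, 'ja, 'o, 'a) ftor"
    and H :: "('io2, 'ia2, 'io, 'ia) ftor" and K :: "('jo2, 'ja2, 'jo, 'ja) ftor"
    and V W :: 'o and p :: "'io \<Rightarrow> 'a" and q :: "'jo \<Rightarrow> 'a"
  assumes "category C"
    and "is_functor I C D" and "is_functor J C E"
    and "final_functor I' I H" and "initial_functor J' J K"
    and "cocone C I D V p" and "cone C J E W q"
  shows "orthogonal C I J D E V p W q \<longleftrightarrow>
         orthogonal C I' J' (fcomp D H) (fcomp E K) V (\<lambda>i'. p (fobj H i')) W (\<lambda>j'. q (fobj K j'))"
proof
  note cC = assms(1) and FD = assms(2) and FE = assms(3) and fin = assms(4) and ini = assms(5)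
    and p = assms(6) and q = assms(7)
  have FH: "is_functor I' I H" using fin unfolding final_functor_def by auto
  have FK: "is_functor J' J K" using ini unfolding initial_functor_def by auto
  assume O: "orthogonal C I J D E V p W q"
  show "orthogonal C I' J' (fcomp D H) (fcomp E K) V (\<lambda>i'. p (fobj H i')) W (\<lambda>j'. q (fobj K j'))"
    unfolding orthogonal_def
  proof (intro allI impI)
    fix g l
    assume g: "cocone C I' (fcomp D H) W g" and l: "cone C J' (fcomp E K) V l"
      and cyl: "\<forall>i\<in>Obj I'. \<forall>j\<in>Obj J'. Comp C (q (fobj K j)) (g i) = Comp C (l j) (p (fobj H i))"
    obtain h where h: "cocone C I D W h" and hg: "\<forall>i'\<in>Obj I'. h (fobj H i') = g i'"
      using cocone_extend[OF fin FD g] by blast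
    obtain k where k: "cone C J E V k" and kl: "\<forall>j'\<in>Obj J'. k (fobj K j') = l j'"
      using cone_extend[OF ini FE l] by blast
    have "\<forall>i\<in>Obj I. \<forall>j\<in>Obj J. Comp C (q j) (h i) = Comp C (k j) (p i)"
      using lemC[OF cC FD FE fin ini p h q k] cyl hg kl by simp
    then have "\<exists>!t. t \<in> hom C V W \<and> (\<forall>i\<in>Obj I. Comp C t (p i) = h i) \<and> (\<forall>j\<in>Obj J. Comp C (q j) t = k j)"
      using O h k unfolding orthogonal_def by blast
    then obtain t where t0: "t \<in> hom C V W \<and> (\<forall>i\<in>Obj I. Comp C t (p i) = h i) \<and> (\<forall>j\<in>Obj J. Comp C (q j) t = k j)"
      and uq: "\<And>t'. t' \<in> hom C V W \<and> (\<forall>i\<in>Obj I. Comp C t' (p i) = h i) \<and> (\<forall>j\<in>Obj J. Comp C (q j) t' = k j) \<Longrightarrow> t' = t"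
      by (elim ex1E) blast
    from t0 have t: "t \<in> hom C V W" "\<forall>i\<in>Obj I. Comp C t (p i) = h i" "\<forall>j\<in>Obj J. Comp C (q j) t = k j" by auto
    show "\<exists>!t. t \<in> hom C V W \<and> (\<forall>i\<in>Obj I'. Comp C t (p (fobj H i)) = g i) \<and> (\<forall>j\<in>Obj J'. Comp C (q (fobj K j)) t = l j)"
    proof (rule ex1I[where a=t])
      show "t \<in> hom C V W \<and> (\<forall>i\<in>Obj I'. Comp C t (p (fobj H i)) = g i) \<and> (\<forall>j\<in>Obj J'. Comp C (q (fobj K j)) t = l j)"
        using t hg kl lemA[OF cC FD fin p h t(1)] lemB[OF cC FE ini q k t(1)] by simp
    next
      fix t' assume t': "t' \<in> hom C V W \<and> (\<forall>i\<in>Obj I'. Comp C t' (p (fobj H i)) = g i) \<and> (\<forall>j\<in>Obj J'. Comp C (q (fobj K j)) t' = l j)"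
      then have t'h: "t' \<in> hom C V W" by simp
      show "t' = t"
        using t' hg kl lemA[OF cC FD fin p h t'h] lemB[OF cC FE ini q k t'h] by (intro uq) simp
    qed
  qed
next
  note cC = assms(1) and FD = assms(2) and FE = assms(3) and fin = assms(4) and ini = assms(5)
    and p = assms(6) and q = assms(7)
  have FH: "is_functor I' I H" using fin unfolding final_functor_def by auto
  have FK: "is_functor J' J K" using ini unfolding initial_functor_def by auto
  assume O: "orthogonal C I' J' (fcomp D H) (fcomp E K) V (\<lambda>i'. p (fobj H i')) W (\<lambda>j'. q (fobj K j'))"
  show "orthogonal C I J D E V p W q"
    unfolding orthogonal_def
  proof (intro allI impI)
    fix h k
    assume h: "cocone C I D W h" and k: "cone C J E V k"
      and cyl: "\<forall>i\<in>Obj I. \<forall>j\<in>Obj J. Comp C (q j) (h i) = Comp C (k j) (p i)"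
    have cyl': "\<forall>i\<in>Obj I'. \<forall>j\<in>Obj J'. Comp C (q (fobj K j)) (h (fobj H i)) = Comp C (k (fobj K j)) (p (fobj H i))"
      using lemC[OF cC FD FE fin ini p h q k] cyl by simp
    have "\<exists>!t. t \<in> hom C V W \<and> (\<forall>i\<in>Obj I'. Comp C t (p (fobj H i)) = h (fobj H i)) \<and> (\<forall>j\<in>Obj J'. Comp C (q (fobj K j)) t = k (fobj K j))"
      using O cocone_restrict[OF FH h] cone_restrict[OF FK k] cyl' unfolding orthogonal_def by blast
    then obtain t where t0: "t \<in> hom C V W \<and> (\<forall>i\<in>Obj I'. Comp C t (p (fobj H i)) = h (fobj H i)) \<and> (\<forall>j\<in>Obj J'. Comp C (q (fobj K j)) t = k (fobj K j))"
      and uq: "\<And>t'. t' \<in> hom C V W \<and> (\<forall>i\<in>Obj I'. Comp C t' (p (fobj H i)) = h (fobj H i)) \<and> (\<forall>j\<in>Obj J'. Comp C (q (fobj K j)) t' = k (fobj K j)) \<Longrightarrow> t' = t"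
      by (elim ex1E) blast
    from t0 have t: "t \<in> hom C V W" "\<forall>i\<in>Obj I'. Comp C t (p (fobj H i)) = h (fobj H i)"
        "\<forall>j\<in>Obj J'. Comp C (q (fobj K j)) t = k (fobj K j)" by auto
    show "\<exists>!t. t \<in> hom C V W \<and> (\<forall>i\<in>Obj I. Comp C t (p i) = h i) \<and> (\<forall>j\<in>Obj J. Comp C (q j) t = k j)"
    proof (rule ex1I[where a=t])
      show "t \<in> hom C V W \<and> (\<forall>i\<in>Obj I. Comp C t (p i) = h i) \<and> (\<forall>j\<in>Obj J. Comp C (q j) t = k j)"
        using t lemA[OF cC FD fin p h t(1)] lemB[OF cC FE ini q k t(1)] by simp
    next
      fix t' assume t': "t' \<in> hom C V W \<and> (\<forall>i\<in>Obj I. Comp C t' (p i) = h i) \<and> (\<forall>j\<in>Obj J. Comp C (q j) t' = k j)"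
      then have t'h: "t' \<in> hom C V W" by simp
      show "t' = t"
        using t' lemA[OF cC FD fin p h t'h] lemB[OF cC FE ini q k t'h] by (intro uq) simp
    qed
  qed
qed

end
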